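(* Let $G=(V,E)$ be an undirected graph and $f:V\to\mathbb{Z}\cup\{-\infty\}$, $g:V\to\mathbb{Z}\cup\{+\infty\}$ with $f\le g$. An $(f,g)$-bounded orientation $D$ of $G$ is decreasingly minimal among the $(f,g)$-bounded orientations of $G$ if and only if there is no directed path in $D$ from a node $s$ to a node $t$ for which $\varrho_D(t)\ge\varrho_D(s)+2$, $\varrho_D(s)<g(s)$ and $\varrho_D(t)>f(t)$.
   Context: An orientation $D$ is $(f,g)$-bounded if $f(v)\le\varrho_D(v)\le g(v)$ for every $v\in V$, where $\varrho_D(v)$ is the number of arcs with head $v$. It is decreasingly minimal among a class of orientations if its in-degree vector $(\varrho_D(v))_v$ has largest component as small as possible within the class, within this second largest as small as possible, and so on. *)

theory Defs
  imports Complex_Main "HOL-Library.Multiset" "HOL-Library.Extended_Real"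
begin

text \<open>An undirected (multi)graph is given by a finite node set V, a finite set E of
edge names, and an endpoint map ep: edge e joins the nodes fst (ep e) and snd (ep e).
An orientation D assigns to each edge an arc (tail, head), which is either ep e or its swap.\<close>

definition graph :: "'a set \<Rightarrow> 'e set \<Rightarrow> ('e \<Rightarrow> 'a \<times> 'a) \<Rightarrow> bool" where
  "graph V E ep \<longleftrightarrow> finite V \<and> finite E \<and> (\<forall>e\<in>E. fst (ep e) \<in> V \<and> snd (ep e) \<in> V)"

definition is_orientation :: "'e set \<Rightarrow> ('e \<Rightarrow> 'a \<times> 'a) \<Rightarrow> ('e \<Rightarrow> 'a \<times> 'a) \<Rightarrow> bool" where
  "is_orientation E ep D \<longleftrightarrow> (\<forall>e\<in>E. D e = ep e \<or> D e = prod.swap (ep e))"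

definition indeg :: "'e set \<Rightarrow> ('e \<Rightarrow> 'a \<times> 'a) \<Rightarrow> 'a \<Rightarrow> nat" where
  "indeg E D v = card {e\<in>E. snd (D e) = v}"

definition fg_bounded ::
  "'a set \<Rightarrow> 'e set \<Rightarrow> ('a \<Rightarrow> ereal) \<Rightarrow> ('a \<Rightarrow> ereal) \<Rightarrow> ('e \<Rightarrow> 'a \<times> 'a) \<Rightarrow> bool" where
  "fg_bounded V E f g D \<longleftrightarrow>
     (\<forall>v\<in>V. f v \<le> ereal (real (indeg E D v)) \<and> ereal (real (indeg E D v)) \<le> g v)"

definition dec_sorted :: "'a set \<Rightarrow> ('a \<Rightarrow> nat) \<Rightarrow> nat list" where
  "dec_sorted V x = rev (sort (sorted_list_of_multiset (image_mset x (mset_set V))))"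

definition dec_less :: "'a set \<Rightarrow> ('a \<Rightarrow> nat) \<Rightarrow> ('a \<Rightarrow> nat) \<Rightarrow> bool" where
  "dec_less V x y \<longleftrightarrow> (dec_sorted V x, dec_sorted V y) \<in> lexord {(a, b). a < b}"

definition dec_min_fg_orientation ::
  "'a set \<Rightarrow> 'e set \<Rightarrow> ('e \<Rightarrow> 'a \<times> 'a) \<Rightarrow> ('a \<Rightarrow> ereal) \<Rightarrow> ('a \<Rightarrow> ereal)
     \<Rightarrow> ('e \<Rightarrow> 'a \<times> 'a) \<Rightarrow> bool" where
  "dec_min_fg_orientation V E ep f g D \<longleftrightarrow>
     is_orientation E ep D \<and> fg_bounded V E f g D \<and>
     \<not> (\<exists>D'. is_orientation E ep D' \<and> fg_bounded V E f g D' \<and>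
              dec_less V (indeg E D') (indeg E D))"

definition arcs :: "'e set \<Rightarrow> ('e \<Rightarrow> 'a \<times> 'a) \<Rightarrow> ('a \<times> 'a) set" where
  "arcs E D = D ` E"

definition dipath :: "'e set \<Rightarrow> ('e \<Rightarrow> 'a \<times> 'a) \<Rightarrow> 'a \<Rightarrow> 'a \<Rightarrow> bool" where
  "dipath E D s t \<longleftrightarrow> (s, t) \<in> (arcs E D)\<^sup>*"

end

theory Submission
  imports Defs
begin

lemma sum_dec_sorted:
  assumes "finite V"
  shows "sum_list (map h (dec_sorted V x)) = (\<Sum>v\<in>V. h (x v))"
proof -
  have "sum_list (map h (dec_sorted V x)) =
        sum_list (map h (sort (sorted_list_of_multiset (image_mset x (mset_set V)))))"
    by (simp add: dec_sorted_def rev_map[symmetric] sum_list_rev)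
  also have "\<dots> = sum_mset (image_mset h (mset (sort (sorted_list_of_multiset (image_mset x (mset_set V))))))"
    by (metis mset_map sum_mset_sum_list)
  also have "\<dots> = sum_mset (image_mset h (image_mset x (mset_set V)))"
    by simp
  also have "\<dots> = (\<Sum>v\<in>V. h (x v))"
    by (simp add: sum_unfold_sum_mset image_mset.compositionality comp_def)
  finally show ?thesis .
qed

lemma length_dec_sorted: "length (dec_sorted V x) = card V"
proof -
  have "length (sorted_list_of_multiset (image_mset x (mset_set V))) = size (image_mset x (mset_set V))"
    by (metis mset_sorted_list_of_multiset size_mset)
  thus ?thesis by (simp add: dec_sorted_def)
qed

lemma sorted_dec_sorted: "sorted_wrt (\<ge>) (dec_sorted V x)"
  by (simp add: dec_sorted_def sorted_wrt_rev)

lemma lex_sum: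
  fixes xs ys :: "nat list"
  assumes "sorted_wrt (\<ge>) ys" "length ys = length xs" "(ys, xs) \<in> lexord {(a,b). a<b}"
  shows "\<exists>k. sum_list (map (\<lambda>y. y - k) ys) < sum_list (map (\<lambda>x. x - k) xs)"
proof -
  from assms(3) obtain u a b v w where ab: "a < b" and ys: "ys = u @ a # v" and xs: "xs = u @ b # w"
    using assms(2) unfolding lexord_def by auto
  have "\<forall>y\<in>set v. y \<le> a" using assms(1) ys by (simp add: sorted_wrt_append)
  hence "sum_list (map (\<lambda>y. y - a) v) = 0" by (induct v) auto
  hence "sum_list (map (\<lambda>y. y - a) ys) = sum_list (map (\<lambda>y. y - a) u)" using ys by simp
  also have "\<dots> < sum_list (map (\<lambda>x. x - a) xs)" using xs ab by simp
  finally show ?thesis by blast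
qed

lemma avoid:
  assumes "(x,t) \<in> R ^^ j" "x \<noteq> s" "\<forall>i\<le>j. (s,t) \<notin> R ^^ i"
  shows "(x,t) \<in> {(a,b)\<in>R. a \<noteq> s \<and> b \<noteq> s} ^^ j"
  using assms
proof (induction j arbitrary: x)
  case 0 thus ?case by simp
next
  case (Suc j)
  obtain y where y: "(x,y) \<in> R" "(y,t) \<in> R ^^ j" using relpow_Suc_D2[OF Suc.prems(1)] by blast
  have "y \<noteq> s" using y Suc.prems(3) by auto
  hence A: "(y,t) \<in> {(a,b)\<in>R. a \<noteq> s \<and> b \<noteq> s} ^^ j" using Suc y by auto
  have B: "(x,y) \<in> {(a,b)\<in>R. a \<noteq> s \<and> b \<noteq> s}" using y(1) `y \<noteq> s` Suc.prems(2) by auto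
  show ?case by (rule relpow_Suc_I2[OF B A])
qed

lemma relpow_mono': "(R::('a\<times>'a) set) \<subseteq> S \<Longrightarrow> (x,y) \<in> R ^^ n \<Longrightarrow> (x,y) \<in> S ^^ n"
proof (induction n arbitrary: x)
  case 0 thus ?case by simp
next
  case (Suc n)
  obtain z where "(x,z) \<in> R" "(z,y) \<in> R ^^ n" using relpow_Suc_D2[OF Suc.prems(2)] by blast
  thus ?case using Suc by (blast intro: relpow_Suc_I2)
qed

lemma indeg_flip:
  assumes "finite E" "e \<in> E" "D e = (a,b)" "a \<noteq> b"
  shows "int (indeg E (D(e := (b,a))) v) = int (indeg E D v) + (if v = a then 1 else 0) - (if v = b then 1 else 0)"
proof -
  consider "v = a" | "v = b" | "v \<noteq> a" "v \<noteq> b" by blast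
  thus ?thesis
  proof cases
    case 1
    have "{e'\<in>E. snd ((D(e := (b,a))) e') = v} = insert e {e'\<in>E. snd (D e') = v}"
      using 1 assms by auto
    moreover have "e \<notin> {e'\<in>E. snd (D e') = v}" using 1 assms by auto
    ultimately show ?thesis using 1 assms by (simp add: indeg_def card_insert_disjoint)
  next
    case 2
    have "{e'\<in>E. snd ((D(e := (b,a))) e') = v} = {e'\<in>E. snd (D e') = v} - {e}"
      using 2 assms by auto
    moreover have "e \<in> {e'\<in>E. snd (D e') = v}" using 2 assms by auto
    moreover have "card {e'\<in>E. snd (D e') = v} \<ge> 1"
      using calculation(2) assms(1) by (metis (no_types, lifting) One_nat_def Suc_leI card_gt_0_iff empty_iff finite_subset mem_Collect_eq subsetI)
    ultimately show ?thesis using 2 assms by (simp add: indeg_def)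
  next
    case 3
    have "{e'\<in>E. snd ((D(e := (b,a))) e') = v} = {e'\<in>E. snd (D e') = v}"
      using 3 assms by auto
    thus ?thesis using 3 by (simp add: indeg_def)
  qed
qed


lemma orient_ends:
  assumes "is_orientation E ep D" "e \<in> E"
  shows "(fst (D e) = fst (ep e) \<and> snd (D e) = snd (ep e)) \<or> (fst (D e) = snd (ep e) \<and> snd (D e) = fst (ep e))"
proof -
  have "D e = ep e \<or> D e = prod.swap (ep e)" using assms unfolding is_orientation_def by blast
  thus ?thesis by (cases "ep e") auto
qed

lemma flip_path:
  assumes "finite E" "is_orientation E ep D" "(s,t) \<in> (arcs E D)^^n" "s \<noteq> t"
  shows "\<exists>D'. is_orientation E ep D' \<and>
    (\<forall>v. int (indeg E D' v) = int (indeg E D v) + (if v = s then 1 else 0) - (if v = t then 1 else 0))"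
  using assms(2-4)
proof (induction n arbitrary: D s t rule: less_induct)
  case (less n D s t)
  show ?case
  proof (cases "\<exists>i<n. (s,t) \<in> (arcs E D)^^i")
    case True
    then obtain i where "i<n" "(s,t) \<in> (arcs E D)^^i" by blast
    then show ?thesis using less by blast
  next
    case False
    hence minl: "\<forall>i<n. (s,t) \<notin> (arcs E D)^^i" by blast
    obtain n' where n: "n = Suc n'" using less.prems(2,3) by (cases n) auto
    have stS: "(s,t) \<in> (arcs E D)^^Suc n'" using less.prems(2) n by simp
    obtain x where sx: "(s,x) \<in> arcs E D" and xt: "(x,t) \<in> (arcs E D)^^n'"
      using relpow_Suc_D2[OF stS] by blast
    obtain e where e: "e \<in> E" "D e = (s,x)" using sx unfolding arcs_def by auto
    have xs: "x \<noteq> s" using xt minl n by auto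
    have sx': "s \<noteq> x" using xs by simp
    define D1 where "D1 = D(e := (x,s))"
    have or1: "is_orientation E ep D1"
    proof -
      have "D e = ep e \<or> D e = prod.swap (ep e)" using less.prems(1) e(1) unfolding is_orientation_def by blast
      hence "(x,s) = ep e \<or> (x,s) = prod.swap (ep e)" using e(2) by (cases "ep e") auto
      thus ?thesis using less.prems(1) unfolding is_orientation_def D1_def by simp
    qed
    have deg1: "\<forall>v. int (indeg E D1 v) = int (indeg E D v) + (if v = s then 1 else 0) - (if v = x then 1 else 0)"
      using indeg_flip[where E=E and e=e and D=D and a=s and b=x, OF assms(1) e sx'] unfolding D1_def by blast
    show ?thesis
    proof (cases "x = t")
      case True thus ?thesis using or1 deg1 by blast
    next
      case False
      have "(x,t) \<in> {(a,b)\<in>arcs E D. a \<noteq> s \<and> b \<noteq> s}^^n'"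
        using avoid[OF xt xs] minl n by auto
      moreover have "{(a,b)\<in>arcs E D. a \<noteq> s \<and> b \<noteq> s} \<subseteq> arcs E D1"
      proof
        fix p assume "p \<in> {(a,b)\<in>arcs E D. a \<noteq> s \<and> b \<noteq> s}"
        hence p1: "p \<in> D ` E" "fst p \<noteq> s" by (cases p, simp add: arcs_def)+
        then obtain e' where e': "e' \<in> E" "p = D e'" "fst p \<noteq> s" by blast
        hence "e' \<noteq> e" using e by auto
        thus "p \<in> arcs E D1" using e' unfolding arcs_def D1_def by force
      qed
      ultimately have "(x,t) \<in> (arcs E D1)^^n'" by (rule relpow_mono'[rotated])
      then obtain D' where D': "is_orientation E ep D'"
        "\<forall>v. int (indeg E D' v) = int (indeg E D1 v) + (if v = x then 1 else 0) - (if v = t then 1 else 0)"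
        using less.IH[of n' D1 x t] n or1 False by auto
      show ?thesis using D' deg1 by (intro exI[of _ D']) auto
    qed
  qed
qed

lemma cut:
  assumes G: "graph V E ep" and orD: "is_orientation E ep D"
    and good: "\<not> (\<exists>s\<in>V. \<exists>t\<in>V. dipath E D s t \<and>
          indeg E D t \<ge> indeg E D s + 2 \<and>
          ereal (real (indeg E D s)) < g s \<and>
          ereal (real (indeg E D t)) > f t)"
    and orD': "is_orientation E ep D'" and bD': "fg_bounded V E f g D'"
  shows "(\<Sum>v\<in>V. indeg E D v - k) \<le> (\<Sum>v\<in>V. indeg E D' v - k)"
proof -
  let ?m = "indeg E D" and ?m' = "indeg E D'"
  have finV: "finite V" and finE: "finite E" using G unfolding graph_def by auto
  define Z where "Z = {u\<in>V. \<exists>t\<in>V. dipath E D u t \<and> ?m t > k \<and> ereal (real (?m t)) > f t}"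
  have ZV: "Z \<subseteq> V" unfolding Z_def by auto
  have finZ: "finite Z" using finV ZV finite_subset by blast
  have ends: "\<forall>e\<in>E. fst (D e) \<in> V \<and> snd (D e) \<in> V"
    using G orient_ends[OF orD] unfolding graph_def by metis
  have closed: "\<forall>e\<in>E. snd (D e) \<in> Z \<longrightarrow> fst (D e) \<in> Z"
  proof (intro ballI impI)
    fix e assume e: "e \<in> E" "snd (D e) \<in> Z"
    then obtain t where t: "t \<in> V" "dipath E D (snd (D e)) t" "?m t > k" "ereal (real (?m t)) > f t"
      unfolding Z_def by auto
    have "(fst (D e), snd (D e)) \<in> arcs E D" using e(1) unfolding arcs_def by force
    hence "dipath E D (fst (D e)) t" using t(2) unfolding dipath_def
      by (meson converse_rtrancl_into_rtrancl)
    thus "fst (D e) \<in> Z" using t ends e(1) unfolding Z_def by auto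
  qed
  have sumcard: "(\<Sum>v\<in>Z. indeg E DD v) = card {e\<in>E. snd (DD e) \<in> Z}" for DD
  proof -
    have "(\<Sum>v\<in>Z. indeg E DD v) = card (\<Union>v\<in>Z. {e\<in>E. snd (DD e) = v})"
      unfolding indeg_def using finZ finE by (subst card_UN_disjoint) auto
    moreover have "(\<Union>v\<in>Z. {e\<in>E. snd (DD e) = v}) = {e\<in>E. snd (DD e) \<in> Z}" by auto
    ultimately show ?thesis by simp
  qed
  define IZ where "IZ = {e\<in>E. fst (ep e) \<in> Z \<and> snd (ep e) \<in> Z}"
  have "{e\<in>E. snd (D e) \<in> Z} \<subseteq> IZ"
  proof
    fix e assume "e \<in> {e\<in>E. snd (D e) \<in> Z}"
    hence "e \<in> E" "snd (D e) \<in> Z" "fst (D e) \<in> Z" using closed by auto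
    thus "e \<in> IZ" using orient_ends[OF orD \<open>e \<in> E\<close>] unfolding IZ_def by auto
  qed
  moreover have "IZ \<subseteq> {e\<in>E. snd (D' e) \<in> Z}"
  proof
    fix e assume "e \<in> IZ"
    thus "e \<in> {e\<in>E. snd (D' e) \<in> Z}" using orient_ends[OF orD', of e] unfolding IZ_def by auto
  qed
  ultimately have "card {e\<in>E. snd (D e) \<in> Z} \<le> card {e\<in>E. snd (D' e) \<in> Z}"
    using finE by (intro card_mono) auto
  hence sZ: "(\<Sum>v\<in>Z. ?m v) \<le> (\<Sum>v\<in>Z. ?m' v)" using sumcard by metis
  have p1: "int (?m v - k) - int (?m' v - k) \<le> int (?m v) - int (?m' v)" if v: "v \<in> Z" for v
  proof (cases "?m v \<ge> k")
    case True thus ?thesis by linarith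
  next
    case False
    from v obtain t where t: "t \<in> V" "dipath E D v t" "?m t > k" "ereal (real (?m t)) > f t"
      unfolding Z_def by auto
    have "v \<in> V" using v ZV by auto
    hence "\<not> (ereal (real (?m v)) < g v)" using good t False by force
    moreover have "ereal (real (?m' v)) \<le> g v" using bD' \<open>v \<in> V\<close> unfolding fg_bounded_def by auto
    ultimately have "ereal (real (?m' v)) \<le> ereal (real (?m v))" by (meson not_less order_trans)
    hence "?m' v \<le> ?m v" by simp
    thus ?thesis using False by linarith
  qed
  have p2: "int (?m v - k) \<le> int (?m' v - k)" if v: "v \<in> V - Z" for v
  proof (cases "?m v > k")
    case False thus ?thesis by simp
  next
    case True
    have "dipath E D v v" unfolding dipath_def by simp
    hence "\<not> (ereal (real (?m v)) > f v)" using v True unfolding Z_def by auto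
    moreover have "f v \<le> ereal (real (?m' v))" using bD' v unfolding fg_bounded_def by auto
    ultimately have "ereal (real (?m v)) \<le> ereal (real (?m' v))" by (meson not_less order_trans)
    hence "?m v \<le> ?m' v" by simp
    thus ?thesis by simp
  qed
  have "(\<Sum>v\<in>V. int (?m v - k) - int (?m' v - k)) =
        (\<Sum>v\<in>Z. int (?m v - k) - int (?m' v - k)) + (\<Sum>v\<in>V-Z. int (?m v - k) - int (?m' v - k))"
    using finV ZV by (metis (no_types, lifting) add.commute sum.subset_diff)
  also have "(\<Sum>v\<in>Z. int (?m v - k) - int (?m' v - k)) \<le> (\<Sum>v\<in>Z. int (?m v) - int (?m' v))"
    using p1 by (intro sum_mono) auto
  also have "(\<Sum>v\<in>Z. int (?m v) - int (?m' v)) = int (\<Sum>v\<in>Z. ?m v) - int (\<Sum>v\<in>Z. ?m' v)"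
    by (simp add: sum_subtractf)
  also have "(\<Sum>v\<in>V-Z. int (?m v - k) - int (?m' v - k)) \<le> 0"
    using p2 by (intro sum_nonpos) auto
  finally have "(\<Sum>v\<in>V. int (?m v - k) - int (?m' v - k)) \<le> 0" using sZ by linarith
  hence "int (\<Sum>v\<in>V. ?m v - k) \<le> int (\<Sum>v\<in>V. ?m' v - k)"
    by (simp add: sum_subtractf)
  thus ?thesis by linarith
qed


lemma g_step:
  assumes "ereal (real n) < g" "g = \<infinity> \<or> (\<exists>k::int. g = ereal (real_of_int k))"
  shows "ereal (real (n + 1)) \<le> g"
  using assms(2)
proof
  assume "g = \<infinity>" thus ?thesis by simp
next
  assume "\<exists>k::int. g = ereal (real_of_int k)"
  then obtain k :: int where k: "g = ereal (real_of_int k)" by blast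
  hence "real n < real_of_int k" using assms(1) by simp
  hence "int n < k" by linarith
  hence "real (n+1) \<le> real_of_int k" by linarith
  thus ?thesis using k by simp
qed

lemma f_step:
  assumes "f < ereal (real n)" "f = -\<infinity> \<or> (\<exists>k::int. f = ereal (real_of_int k))"
  shows "f \<le> ereal (real (n - 1))"
  using assms(2)
proof
  assume "f = -\<infinity>" thus ?thesis by simp
next
  assume "\<exists>k::int. f = ereal (real_of_int k)"
  then obtain k :: int where k: "f = ereal (real_of_int k)" by blast
  hence "real_of_int k < real n" using assms(1) by simp
  hence "k < int n" by linarith
  hence "real_of_int k \<le> real (n - 1)" by linarith
  thus ?thesis using k by simp
qed

lemma sum_two_change:
  fixes h :: "nat \<Rightarrow> int"
  assumes "finite V" "s \<in> V" "t \<in> V" "s \<noteq> t" "\<forall>v. v \<noteq> s \<longrightarrow> v \<noteq> t \<longrightarrow> m' v = m v"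
  shows "(\<Sum>v\<in>V. h (m' v)) - (\<Sum>v\<in>V. h (m v)) = (h (m' s) - h (m s)) + (h (m' t) - h (m t))"
proof -
  have "(\<Sum>v\<in>V. h (m' v)) - (\<Sum>v\<in>V. h (m v)) = (\<Sum>v\<in>V. h (m' v) - h (m v))"
    by (simp add: sum_subtractf)
  also have "\<dots> = (\<Sum>v\<in>{s,t}. h (m' v) - h (m v))"
    using assms by (intro sum.mono_neutral_right) auto
  also have "\<dots> = (h (m' s) - h (m s)) + (h (m' t) - h (m t))" using assms(4) by simp
  finally show ?thesis .
qed

theorem theorem5p1:
  fixes V :: "'a set" and E :: "'e set" and ep D :: "'e \<Rightarrow> 'a \<times> 'a"
    and f g :: "'a \<Rightarrow> ereal"
  assumes "graph V E ep"
    and "\<forall>v\<in>V. f v = -\<infinity> \<or> (\<exists>k::int. f v = ereal (real_of_int k))"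
    and "\<forall>v\<in>V. g v = \<infinity> \<or> (\<exists>k::int. g v = ereal (real_of_int k))"
    and "\<forall>v\<in>V. f v \<le> g v"
    and "is_orientation E ep D"
    and "fg_bounded V E f g D"
  shows "dec_min_fg_orientation V E ep f g D \<longleftrightarrow>
    \<not> (\<exists>s\<in>V. \<exists>t\<in>V. dipath E D s t \<and>
          indeg E D t \<ge> indeg E D s + 2 \<and>
          ereal (real (indeg E D s)) < g s \<and>
          ereal (real (indeg E D t)) > f t)"
proof
  have finV: "finite V" and finE: "finite E" using assms(1) unfolding graph_def by auto
  let ?m = "indeg E D"
  assume dm: "dec_min_fg_orientation V E ep f g D"
  show "\<not> (\<exists>s\<in>V. \<exists>t\<in>V. dipath E D s t \<and>
          indeg E D t \<ge> indeg E D s + 2 \<and>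
          ereal (real (indeg E D s)) < g s \<and>
          ereal (real (indeg E D t)) > f t)"
  proof
    assume "\<exists>s\<in>V. \<exists>t\<in>V. dipath E D s t \<and>
          indeg E D t \<ge> indeg E D s + 2 \<and>
          ereal (real (indeg E D s)) < g s \<and>
          ereal (real (indeg E D t)) > f t"
    then obtain s t where st: "s \<in> V" "t \<in> V" "dipath E D s t" "?m t \<ge> ?m s + 2"
      "ereal (real (?m s)) < g s" "ereal (real (?m t)) > f t" by blast
    have sne: "s \<noteq> t" using st(4) by auto
    obtain n where "(s,t) \<in> (arcs E D)^^n" using st(3) unfolding dipath_def rtrancl_power by blast
    then obtain D' where D': "is_orientation E ep D'"
      "\<forall>v. int (indeg E D' v) = int (?m v) + (if v = s then 1 else 0) - (if v = t then 1 else 0)"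
      using flip_path[OF finE assms(5) _ sne] by blast
    let ?m' = "indeg E D'"
    have ms: "?m' s = ?m s + 1" using D'(2)[rule_format, of s] sne by simp
    have mt: "?m' t = ?m t - 1" using D'(2)[rule_format, of t] sne st(4) by simp
    have mo: "\<forall>v. v \<noteq> s \<longrightarrow> v \<noteq> t \<longrightarrow> ?m' v = ?m v"
    proof (intro allI impI)
      fix v assume "v \<noteq> s" "v \<noteq> t"
      hence "int (?m' v) = int (?m v)" using D'(2)[rule_format, of v] by simp
      thus "?m' v = ?m v" by simp
    qed
    have bD': "fg_bounded V E f g D'"
      unfolding fg_bounded_def
    proof
      fix v assume v: "v \<in> V"
      have b: "f v \<le> ereal (real (?m v))" "ereal (real (?m v)) \<le> g v"
        using assms(6) v unfolding fg_bounded_def by auto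
      show "f v \<le> ereal (real (?m' v)) \<and> ereal (real (?m' v)) \<le> g v"
      proof (cases "v = s")
        case True
        have "ereal (real (?m s + 1)) \<le> g s" using g_step[OF st(5)] assms(3) st(1) by blast
        moreover have "ereal (real (?m s)) \<le> ereal (real (?m s + 1))" by simp
        ultimately show ?thesis using True ms order_trans[OF b(1)] by simp
      next
        case False
        show ?thesis
        proof (cases "v = t")
          case True
          have "f t \<le> ereal (real (?m t - 1))" using f_step[OF st(6)] assms(2) st(2) by blast
          moreover have "ereal (real (?m t - 1)) \<le> ereal (real (?m t))" by simp
          ultimately show ?thesis using True mt order_trans[OF _ b(2)] by simp
        next
          case False
          thus ?thesis using mo \<open>v \<noteq> s\<close> b by simp
        qed
      qed
    qed
    have key: "(\<Sum>v\<in>V. int (?m' v - k)) \<le> (\<Sum>v\<in>V. int (?m v - k))" for k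
    proof -
      have "(\<Sum>v\<in>V. int (?m' v - k)) - (\<Sum>v\<in>V. int (?m v - k)) =
            (int (?m' s - k) - int (?m s - k)) + (int (?m' t - k) - int (?m t - k))"
        using sum_two_change[OF finV st(1,2) sne mo, of "\<lambda>y. int (y - k)"] by simp
      also have "\<dots> \<le> 0" using ms mt st(4) by linarith
      finally show ?thesis by simp
    qed
    define k0 where "k0 = ?m t - 1"
    have key0: "(\<Sum>v\<in>V. int (?m' v - k0)) < (\<Sum>v\<in>V. int (?m v - k0))"
    proof -
      have "(\<Sum>v\<in>V. int (?m' v - k0)) - (\<Sum>v\<in>V. int (?m v - k0)) =
            (int (?m' s - k0) - int (?m s - k0)) + (int (?m' t - k0) - int (?m t - k0))"
        using sum_two_change[OF finV st(1,2) sne mo, of "\<lambda>y. int (y - k0)"] by simp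
      also have "\<dots> < 0" using ms mt st(4) unfolding k0_def by linarith
      finally show ?thesis by simp
    qed
    have sums: "sum_list (map (\<lambda>y. int (y - k)) (dec_sorted V x)) = (\<Sum>v\<in>V. int (x v - k))" for x k
      using sum_dec_sorted[OF finV] by blast
    have "dec_less V ?m' ?m"
    proof -
      have "(dec_sorted V ?m', dec_sorted V ?m) \<in> lexord {(a,b). a<b} \<or> dec_sorted V ?m' = dec_sorted V ?m
            \<or> (dec_sorted V ?m, dec_sorted V ?m') \<in> lexord {(a,b::nat). a<b}"
        by (rule lexord_linear) auto
      moreover have "dec_sorted V ?m' \<noteq> dec_sorted V ?m"
        using sums[where x="?m'" and k=k0] sums[where x="?m" and k=k0] key0 by auto
      moreover have "(dec_sorted V ?m, dec_sorted V ?m') \<notin> lexord {(a,b::nat). a<b}"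
      proof
        assume "(dec_sorted V ?m, dec_sorted V ?m') \<in> lexord {(a,b::nat). a<b}"
        have "\<exists>k. sum_list (map (\<lambda>y. y - k) (dec_sorted V ?m)) < sum_list (map (\<lambda>x. x - k) (dec_sorted V ?m'))"
          by (rule lex_sum[OF sorted_dec_sorted _ \<open>(dec_sorted V ?m, dec_sorted V ?m') \<in> lexord {(a,b::nat). a<b}\<close>])
            (simp add: length_dec_sorted)
        then obtain k where k: "sum_list (map (\<lambda>y. y - k) (dec_sorted V ?m)) < sum_list (map (\<lambda>x. x - k) (dec_sorted V ?m'))"
          by blast
        have "(\<Sum>v\<in>V. ?m v - k) < (\<Sum>v\<in>V. ?m' v - k)"
          using k by (simp only: sum_dec_sorted[OF finV])
        hence "(\<Sum>v\<in>V. int (?m v - k)) < (\<Sum>v\<in>V. int (?m' v - k))"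
          by (simp only: of_nat_sum[symmetric] of_nat_less_iff)
        thus False using key[of k] by linarith
      qed
      ultimately show ?thesis unfolding dec_less_def by blast
    qed
    thus False using dm D'(1) bD' unfolding dec_min_fg_orientation_def by blast
  qed
next
  have finV: "finite V" using assms(1) unfolding graph_def by auto
  assume good: "\<not> (\<exists>s\<in>V. \<exists>t\<in>V. dipath E D s t \<and>
          indeg E D t \<ge> indeg E D s + 2 \<and>
          ereal (real (indeg E D s)) < g s \<and>
          ereal (real (indeg E D t)) > f t)"
  show "dec_min_fg_orientation V E ep f g D"
    unfolding dec_min_fg_orientation_def
  proof (intro conjI assms(5,6) notI)
    assume "\<exists>D'. is_orientation E ep D' \<and> fg_bounded V E f g D' \<and> dec_less V (indeg E D') (indeg E D)"
    then obtain D' where D': "is_orientation E ep D'" "fg_bounded V E f g D'" "dec_less V (indeg E D') (indeg E D)"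
      by blast
    have "\<exists>k. sum_list (map (\<lambda>y. y - k) (dec_sorted V (indeg E D'))) < sum_list (map (\<lambda>x. x - k) (dec_sorted V (indeg E D)))"
      by (rule lex_sum[OF sorted_dec_sorted _ D'(3)[unfolded dec_less_def]]) (simp add: length_dec_sorted)
    then obtain k where k: "sum_list (map (\<lambda>y. y - k) (dec_sorted V (indeg E D'))) < sum_list (map (\<lambda>x. x - k) (dec_sorted V (indeg E D)))"
      by blast
    hence "(\<Sum>v\<in>V. indeg E D' v - k) < (\<Sum>v\<in>V. indeg E D v - k)"
      by (simp only: sum_dec_sorted[OF finV])
    moreover have "(\<Sum>v\<in>V. indeg E D v - k) \<le> (\<Sum>v\<in>V. indeg E D' v - k)"
      using cut[OF assms(1,5) good D'(1,2)] by blast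
    ultimately show False by linarith
  qed
qed

end
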